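(* For every $m>0$ there exist $C(m)\ge0$ and $\tau_0\ge0$ such that for all $\tau\ge\tau_0$, $$\big|\tau^{-2}e^{\tau m/2}F_1(m,\tau)-1\big|\le C(m)\,\tau\, e^{-\tau m/2}.$$ In particular $\tau^{-2}e^{\tau m/2}F_1(m,\tau)\to1$ as $\tau\to+\infty$.
   Context: $F_1(m,\tau)=\lambda_1\big((-m/2,m/2),\tau e_r\big)$, the principal Dirichlet eigenvalue on the interval $(-m/2,m/2)$ of the operator $u\mapsto -u''+\tau\,\mathrm{sgn}(x)\,u'$ (here $e_r(x)=x/|x|=\mathrm{sgn}(x)$). *)

theory Defs
  imports "HOL-Analysis.Analysis"
begin

text \<open>Principal Dirichlet eigenvalue on the interval (-m/2, m/2) of the operator
  u \<mapsto> -u'' + tau sgn(x) u'.  lambda is the principal eigenvalue iff there is an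
  eigenfunction that is positive inside the interval, vanishes at both endpoints,
  is continuous on the closed interval, C^1-differentiable inside, twice
  differentiable away from the discontinuity point 0 of the drift, and satisfies
  -u'' + tau sgn(x) u' = lambda u there (strong W^{2,infinity} sense).\<close>

definition is_principal_eigenpair ::
  "real \<Rightarrow> real \<Rightarrow> real \<Rightarrow> (real \<Rightarrow> real) \<Rightarrow> bool" where
  "is_principal_eigenpair m \<tau> lam u \<longleftrightarrow>
     continuous_on {-m/2..m/2} u \<and> u (-m/2) = 0 \<and> u (m/2) = 0 \<and>
     (\<exists>u'. (\<forall>x\<in>{-m/2<..<m/2}. u x > 0 \<and> (u has_real_derivative u' x) (at x)) \<and>
           (\<forall>x\<in>{-m/2<..<m/2} - {0}. \<exists>u''. (u' has_real_derivative u'') (at x) \<and>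
                 - u'' + \<tau> * sgn x * u' x = lam * u x))"

definition F1 :: "real \<Rightarrow> real \<Rightarrow> real" where
  "F1 m \<tau> = (THE lam. \<exists>u. is_principal_eigenpair m \<tau> lam u)"

end

theory Submission
  imports Defs "HOL-Real_Asymp.Real_Asymp"
begin

lemma even_deriv0:
  fixes V :: "real \<Rightarrow> real"
  assumes "(V has_real_derivative 0) (at 0)"
  shows "((\<lambda>x. V \<bar>x\<bar>) has_real_derivative 0) (at 0)"
proof -
  have k: "((\<lambda>h. (V h - V 0) / h) \<longlongrightarrow> 0) (at 0)"
    using assms by (simp add: has_field_derivative_iff)
  have ab: "filterlim abs (at 0) (at (0::real))"
    unfolding filterlim_at
    by (auto simp: eventually_at_filter intro!: tendsto_eq_intros)
  have "((\<lambda>h. (V \<bar>h\<bar> - V 0) / \<bar>h\<bar>) \<longlongrightarrow> 0) (at 0)"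
    using filterlim_compose[OF k ab] by simp
  then have "((\<lambda>h. norm ((V \<bar>h\<bar> - V \<bar>0\<bar>) / h)) \<longlongrightarrow> 0) (at 0)"
    using tendsto_norm_zero[of "(\<lambda>h. (V \<bar>h\<bar> - V 0) / \<bar>h\<bar>)"]
    by (simp add: abs_divide)
  then show ?thesis
    unfolding has_field_derivative_iff
    by (subst tendsto_norm_zero_iff[symmetric]) simp
qed

lemma V_deriv:
  fixes \<tau> \<delta> :: real
  shows "((\<lambda>y. (\<tau>-\<delta>)*exp(\<delta>*y) - \<delta>*exp((\<tau>-\<delta>)*y)) has_real_derivative
          \<delta>*(\<tau>-\<delta>)*(exp(\<delta>*y) - exp((\<tau>-\<delta>)*y))) (at y)"
  by (rule derivative_eq_intros refl | simp add: algebra_simps)+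

lemma V'_deriv:
  fixes \<tau> \<delta> :: real
  shows "((\<lambda>y. \<delta>*(\<tau>-\<delta>)*(exp(\<delta>*y) - exp((\<tau>-\<delta>)*y))) has_real_derivative
          \<delta>*(\<tau>-\<delta>)*(\<delta>*exp(\<delta>*y) - (\<tau>-\<delta>)*exp((\<tau>-\<delta>)*y))) (at y)"
  by (rule derivative_eq_intros refl | simp add: algebra_simps)+

lemma exists_pair:
  fixes m \<tau> \<delta> :: real
  assumes m: "m > 0" and t: "\<tau> > 0" and d: "0 < \<delta>" "2*\<delta> < \<tau>"
    and rel: "\<delta>*(exp((\<tau>-2*\<delta>)*(m/2))+1) = \<tau>"
  shows "is_principal_eigenpair m \<tau> (\<delta>*(\<tau>-\<delta>))
           (\<lambda>x. (\<tau>-\<delta>)*exp(\<delta>*\<bar>x\<bar>) - \<delta>*exp((\<tau>-\<delta>)*\<bar>x\<bar>))"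
proof -
  define a where "a = m/2"
  have a: "a > 0" using m a_def by simp
  define V where "V = (\<lambda>y::real. (\<tau>-\<delta>)*exp(\<delta>*y) - \<delta>*exp((\<tau>-\<delta>)*y))"
  define V' where "V' = (\<lambda>y::real. \<delta>*(\<tau>-\<delta>)*(exp(\<delta>*y) - exp((\<tau>-\<delta>)*y)))"
  define V'' where "V'' = (\<lambda>y::real. \<delta>*(\<tau>-\<delta>)*(\<delta>*exp(\<delta>*y) - (\<tau>-\<delta>)*exp((\<tau>-\<delta>)*y)))"
  define U' where "U' = (\<lambda>x. sgn x * V' \<bar>x\<bar>)"
  have dV: "(V has_real_derivative V' y) (at y)" for y
    unfolding V_def V'_def by (rule V_deriv)
  have dV': "(V' has_real_derivative V'' y) (at y)" for y
    unfolding V''_def V'_def by (rule V'_deriv)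
  have rel2: "\<delta> * exp((\<tau>-2*\<delta>)*a) = \<tau> - \<delta>"
    using rel unfolding a_def by (simp add: algebra_simps)
  have Va: "V a = 0"
  proof -
    have "\<delta>*exp((\<tau>-\<delta>)*a) = \<delta> * exp((\<tau>-2*\<delta>)*a) * exp(\<delta>*a)"
      by (simp add: mult_exp_exp algebra_simps)
    then show ?thesis unfolding V_def using rel2 by simp
  qed
  have Vpos: "V y > 0" if "0 \<le> y" "y < a" for y
  proof -
    have "-((\<tau>-2*\<delta>)*a) + (\<tau>-\<delta>)*y < \<delta>*y"
    proof -
      have "(\<tau>-2*\<delta>)*(y - a) < 0" using d that by (intro mult_pos_neg) auto
      then show ?thesis by (simp add: algebra_simps)
    qed
    then have "exp(-((\<tau>-2*\<delta>)*a) + (\<tau>-\<delta>)*y) < exp(\<delta>*y)" by simp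
    then have "(\<tau>-\<delta>)*exp(-((\<tau>-2*\<delta>)*a) + (\<tau>-\<delta>)*y) < (\<tau>-\<delta>)*exp(\<delta>*y)"
      using d by simp
    moreover have "\<delta>*exp((\<tau>-\<delta>)*y) = (\<tau>-\<delta>)*exp(-((\<tau>-2*\<delta>)*a) + (\<tau>-\<delta>)*y)"
    proof -
      have "(\<tau>-\<delta>)*exp(-((\<tau>-2*\<delta>)*a) + (\<tau>-\<delta>)*y) = \<delta> * exp((\<tau>-2*\<delta>)*a) * exp(-((\<tau>-2*\<delta>)*a)) * exp((\<tau>-\<delta>)*y)"
        using rel2 by (metis exp_add mult.assoc)
      also have "\<dots> = \<delta>*exp((\<tau>-\<delta>)*y)" by (simp add: exp_minus)
      finally show ?thesis by simp
    qed
    ultimately show ?thesis unfolding V_def by simp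
  qed
  have V'0: "V' 0 = 0" unfolding V'_def by simp
  have dU: "((\<lambda>x. V \<bar>x\<bar>) has_real_derivative U' x) (at x)" for x
  proof (cases "x = 0")
    case True
    then show ?thesis using even_deriv0[of V] dV[of 0] V'0 unfolding U'_def by simp
  next
    case False
    show ?thesis
    proof (cases "x > 0")
      case True
      show ?thesis
        apply (rule has_field_derivative_transform_within_open[of V _ x "{0<..}"])
        using dV[of x] True unfolding U'_def by auto
    next
      case False
      with \<open>x \<noteq> 0\<close> have xn: "x < 0" by simp
      have "((\<lambda>x. V (-x)) has_real_derivative V' (-x) * (-1)) (at x)"
        using DERIV_chain2[of V "V'(-x)" uminus x "-1" UNIV] dV[of "-x"]
        by (simp add: DERIV_minus DERIV_ident del: mult_minus1_right)
      moreover have eq: "U' x = V' (-x) * - 1" using xn by (simp add: U'_def)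
      ultimately have "((\<lambda>x. V (-x)) has_real_derivative U' x) (at x)" by (simp only: eq)
      then show ?thesis
        apply (rule has_field_derivative_transform_within_open[of _ _ x "{..<0}"])
        using xn unfolding U'_def by auto
    qed
  qed
  have dU': "(U' has_real_derivative V'' \<bar>x\<bar>) (at x)" if "x \<noteq> 0" for x
  proof (cases "x > 0")
    case True
    show ?thesis
      apply (rule has_field_derivative_transform_within_open[of V' _ x "{0<..}"])
      using dV'[of x] True unfolding U'_def by auto
  next
    case False
    with \<open>x \<noteq> 0\<close> have xn: "x < 0" by simp
    have "((\<lambda>x. V' (-x)) has_real_derivative V'' (-x) * (-1)) (at x)"
      using DERIV_chain2[of V' "V''(-x)" uminus x "-1" UNIV] dV'[of "-x"]
      by (simp add: DERIV_minus DERIV_ident del: mult_minus1_right)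
    then have "((\<lambda>x. - V' (-x)) has_real_derivative V'' (-x)) (at x)"
      using DERIV_minus by fastforce
    moreover have eq: "V'' (-x) = V'' \<bar>x\<bar>" using xn by simp
    ultimately have "((\<lambda>x. - V' (-x)) has_real_derivative V'' \<bar>x\<bar>) (at x)" by (simp only: eq)
    then show ?thesis
      apply (rule has_field_derivative_transform_within_open[of _ _ x "{..<0}"])
      using xn unfolding U'_def by auto
  qed
  have ode: "- V'' \<bar>x\<bar> + \<tau> * sgn x * U' x = \<delta>*(\<tau>-\<delta>) * V \<bar>x\<bar>" if "x \<noteq> 0" for x
  proof -
    have "sgn x * sgn x = (1::real)" using that by (simp add: sgn_if)
    then have "\<tau> * sgn x * U' x = \<tau> * V' \<bar>x\<bar>" unfolding U'_def
      by (metis mult.assoc mult.left_commute mult_1)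
    then show ?thesis unfolding V''_def V'_def V_def by (simp add: algebra_simps)
  qed
  have cont: "continuous_on {-m/2..m/2} (\<lambda>x. V \<bar>x\<bar>)"
    unfolding V_def by (intro continuous_intros)
  show ?thesis
    unfolding is_principal_eigenpair_def
  proof (intro conjI)
    show "continuous_on {-m/2..m/2} (\<lambda>x. (\<tau>-\<delta>)*exp(\<delta>*\<bar>x\<bar>) - \<delta>*exp((\<tau>-\<delta>)*\<bar>x\<bar>))"
      using cont unfolding V_def .
    show "(\<tau>-\<delta>)*exp(\<delta>*\<bar>-m/2\<bar>) - \<delta>*exp((\<tau>-\<delta>)*\<bar>-m/2\<bar>) = 0"
      using Va m unfolding V_def a_def by simp
    show "(\<tau>-\<delta>)*exp(\<delta>*\<bar>m/2\<bar>) - \<delta>*exp((\<tau>-\<delta>)*\<bar>m/2\<bar>) = 0"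
      using Va m unfolding V_def a_def by simp
    show "\<exists>u'. (\<forall>x\<in>{-m/2<..<m/2}. (\<tau>-\<delta>)*exp(\<delta>*\<bar>x\<bar>) - \<delta>*exp((\<tau>-\<delta>)*\<bar>x\<bar>) > 0 \<and>
            ((\<lambda>x. (\<tau>-\<delta>)*exp(\<delta>*\<bar>x\<bar>) - \<delta>*exp((\<tau>-\<delta>)*\<bar>x\<bar>)) has_real_derivative u' x) (at x)) \<and>
           (\<forall>x\<in>{-m/2<..<m/2} - {0}. \<exists>u''. (u' has_real_derivative u'') (at x) \<and>
                 - u'' + \<tau> * sgn x * u' x = \<delta>*(\<tau>-\<delta>) * ((\<tau>-\<delta>)*exp(\<delta>*\<bar>x\<bar>) - \<delta>*exp((\<tau>-\<delta>)*\<bar>x\<bar>)))"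
    proof (intro exI[of _ U'] conjI ballI)
      fix x assume x: "x \<in> {-m/2<..<m/2}"
      then have "\<bar>x\<bar> < a" unfolding a_def by auto
      then show "(\<tau>-\<delta>)*exp(\<delta>*\<bar>x\<bar>) - \<delta>*exp((\<tau>-\<delta>)*\<bar>x\<bar>) > 0"
        using Vpos[of "\<bar>x\<bar>"] unfolding V_def by simp
      show "((\<lambda>x. (\<tau>-\<delta>)*exp(\<delta>*\<bar>x\<bar>) - \<delta>*exp((\<tau>-\<delta>)*\<bar>x\<bar>)) has_real_derivative U' x) (at x)"
        using dU[of x] unfolding V_def .
    next
      fix x assume x: "x \<in> {-m/2<..<m/2} - {0}"
      then show "\<exists>u''. (U' has_real_derivative u'') (at x) \<and>
                 - u'' + \<tau> * sgn x * U' x = \<delta>*(\<tau>-\<delta>) * ((\<tau>-\<delta>)*exp(\<delta>*\<bar>x\<bar>) - \<delta>*exp((\<tau>-\<delta>)*\<bar>x\<bar>))"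
        using dU'[of x] ode[of x] unfolding V_def by auto
    qed
  qed
qed

lemma lip_bound:
  fixes g g' :: "real \<Rightarrow> real"
  assumes der: "\<And>x. x \<in> {p<..<q} \<Longrightarrow> (g has_real_derivative g' x) (at x)"
    and bd: "\<And>x. x \<in> {p<..<q} \<Longrightarrow> \<bar>g' x\<bar> \<le> L"
    and c: "c \<in> {p<..<q}" and x: "x \<in> {p<..<q}"
  shows "\<bar>g x - g c\<bar> \<le> L * \<bar>x - c\<bar>"
proof -
  have main: "\<bar>g y - g z\<bar> \<le> L * \<bar>y - z\<bar>" if "z < y" "z \<in> {p<..<q}" "y \<in> {p<..<q}" for y z
  proof -
    have "\<exists>w. z < w \<and> w < y \<and> g y - g z = (y - z) * g' w"
      by (rule MVT2) (use that der in auto)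
    then obtain w where w: "z < w" "w < y" "g y - g z = (y - z) * g' w" by blast
    have "w \<in> {p<..<q}" using w that by auto
    then have "\<bar>g' w\<bar> \<le> L" by (rule bd)
    then show ?thesis using w that by (simp add: abs_mult mult.commute mult_right_mono)
  qed
  consider "c < x" | "x < c" | "x = c" by linarith
  then show ?thesis
  proof cases
    case 1 then show ?thesis using main[of c x] c x by simp
  next
    case 2 then show ?thesis using main[of x c] c x by (simp add: abs_minus_commute)
  next
    case 3 then show ?thesis using bd[OF x] by simp
  qed
qed

lemma deriv_right:
  fixes f f' :: "real \<Rightarrow> real"
  assumes q: "0 < q"
    and der: "\<And>x. x \<in> {0..<q} \<Longrightarrow> (f has_real_derivative f' x) (at x)"
    and der2: "\<And>x. x \<in> {0<..<q} \<Longrightarrow> (f' has_real_derivative f'' x) (at x)"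
    and bd: "\<And>x. x \<in> {0<..<q} \<Longrightarrow> \<bar>f'' x\<bar> \<le> L"
    and x: "x \<in> {0<..<q}"
  shows "\<bar>f' x - f' 0\<bar> \<le> L * x"
proof -
  have lim: "((\<lambda>h. (f h - f 0) / (h - 0)) \<longlongrightarrow> f' 0) (at_right 0)"
    using der[of 0] q unfolding has_field_derivative_iff
    by (auto intro: filterlim_mono simp: at_le)
  then have lim2: "((\<lambda>h. \<bar>(f h - f 0) / (h - 0) - f' x\<bar>) \<longlongrightarrow> \<bar>f' 0 - f' x\<bar>) (at_right 0)"
    by (intro tendsto_intros)
  have ev: "eventually (\<lambda>h. \<bar>(f h - f 0) / (h - 0) - f' x\<bar> \<le> L * x) (at_right 0)"
  proof (rule eventually_mono[OF eventually_at_right_real[of 0 x]])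
    show "0 < x" using x by simp
    fix h assume h: "h \<in> {0<..<x}"
    have "\<exists>w. 0 < w \<and> w < h \<and> f h - f 0 = (h - 0) * f' w"
      by (rule MVT2) (use h x der in auto)
    then obtain w where w: "0 < w" "w < h" "f h - f 0 = (h - 0) * f' w" by blast
    have "\<bar>f' w - f' x\<bar> \<le> L * \<bar>w - x\<bar>"
      using lip_bound[of 0 q f' f'' L x w] der2 bd w h x by auto
    moreover have "L * \<bar>w - x\<bar> \<le> L * x"
    proof -
      have "L \<ge> 0" using bd[OF x] by linarith
      then show ?thesis using w h by (intro mult_left_mono) auto
    qed
    moreover have "(f h - f 0) / (h - 0) = f' w" using w h by (simp add: field_simps)
    ultimately show "\<bar>(f h - f 0) / (h - 0) - f' x\<bar> \<le> L * x" by (simp add: abs_minus_commute)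
  qed
  have "\<bar>f' 0 - f' x\<bar> \<le> L * x"
    by (rule tendsto_upperbound[OF lim2 ev]) simp
  then show ?thesis by (simp add: abs_minus_commute)
qed

lemma deriv_left:
  fixes f f' :: "real \<Rightarrow> real"
  assumes q: "q < 0"
    and der: "\<And>x. x \<in> {q<..0} \<Longrightarrow> (f has_real_derivative f' x) (at x)"
    and der2: "\<And>x. x \<in> {q<..<0} \<Longrightarrow> (f' has_real_derivative f'' x) (at x)"
    and bd: "\<And>x. x \<in> {q<..<0} \<Longrightarrow> \<bar>f'' x\<bar> \<le> L"
    and x: "x \<in> {q<..<0}"
  shows "\<bar>f' x - f' 0\<bar> \<le> L * (- x)"
proof -
  have lim: "((\<lambda>h. (f h - f 0) / (h - 0)) \<longlongrightarrow> f' 0) (at_left 0)"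
    using der[of 0] q unfolding has_field_derivative_iff
    by (auto intro: filterlim_mono simp: at_le)
  then have lim2: "((\<lambda>h. \<bar>(f h - f 0) / (h - 0) - f' x\<bar>) \<longlongrightarrow> \<bar>f' 0 - f' x\<bar>) (at_left 0)"
    by (intro tendsto_intros)
  have ev: "eventually (\<lambda>h. \<bar>(f h - f 0) / (h - 0) - f' x\<bar> \<le> L * (-x)) (at_left 0)"
  proof (rule eventually_mono[OF eventually_at_left_real[of x 0]])
    show "x < 0" using x by simp
    fix h assume h: "h \<in> {x<..<0}"
    have "\<exists>w. h < w \<and> w < 0 \<and> f 0 - f h = (0 - h) * f' w"
      by (rule MVT2) (use h x der in auto)
    then obtain w where w: "h < w" "w < 0" "f 0 - f h = (0 - h) * f' w" by blast
    have "\<bar>f' w - f' x\<bar> \<le> L * \<bar>w - x\<bar>"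
      using lip_bound[of q 0 f' f'' L x w] der2 bd w h x by auto
    moreover have "L * \<bar>w - x\<bar> \<le> L * (-x)"
    proof -
      have "L \<ge> 0" using bd[OF x] by linarith
      then show ?thesis using w h by (intro mult_left_mono) auto
    qed
    moreover have "(f h - f 0) / (h - 0) = f' w" using w h by (simp add: field_simps)
    ultimately show "\<bar>(f h - f 0) / (h - 0) - f' x\<bar> \<le> L * (-x)" by (simp add: abs_minus_commute)
  qed
  have "\<bar>f' 0 - f' x\<bar> \<le> L * (-x)"
    by (rule tendsto_upperbound[OF lim2 ev]) simp
  then show ?thesis by (simp add: abs_minus_commute)
qed

lemma abs_deriv:
  fixes x :: real
  assumes "x \<noteq> 0"
  shows "(abs has_real_derivative sgn x) (at x)"
proof (cases "x > 0")
  case True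
  show ?thesis
    by (rule has_field_derivative_transform_within_open[of "\<lambda>y. y" _ x "{0<..}"])
       (use True in \<open>auto intro!: derivative_eq_intros\<close>)
next
  case False
  with assms have "x < 0" by simp
  show ?thesis
    by (rule has_field_derivative_transform_within_open[of "\<lambda>y. -y" _ x "{..<0}"])
       (use \<open>x < 0\<close> in \<open>auto intro!: derivative_eq_intros\<close>)
qed

lemma expabs_deriv:
  fixes x :: real
  assumes "x \<noteq> 0"
  shows "((\<lambda>y. exp (-\<tau> * \<bar>y\<bar>)) has_real_derivative (- \<tau> * sgn x * exp (-\<tau> * \<bar>x\<bar>))) (at x)"
proof -
  have "((\<lambda>y. -\<tau> * \<bar>y\<bar>) has_real_derivative (-\<tau> * sgn x)) (at x)"
    using DERIV_cmult[OF abs_deriv[OF assms], of "-\<tau>"] by simp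
  from DERIV_chain2[OF DERIV_exp this] show ?thesis by (simp add: mult.commute)
qed

lemma eig_facts:
  assumes a: "a > 0" and E: "is_principal_eigenpair (2*a) \<tau> l u"
  obtains u' B where
    "continuous_on {-a..a} u" "u (-a) = 0" "u a = 0"
    "\<And>x. x \<in> {-a<..<a} \<Longrightarrow> u x > 0"
    "\<And>x. x \<in> {-a<..<a} \<Longrightarrow> (u has_real_derivative u' x) (at x)"
    "\<And>x. x \<in> {-a<..<a} - {0} \<Longrightarrow> (u' has_real_derivative (\<tau> * sgn x * u' x - l * u x)) (at x)"
    "\<And>x. x \<in> {-a<..<a} - {0} \<Longrightarrow> \<bar>u' x\<bar> \<le> B"
    "isCont u' 0"
proof -
  from E obtain u' where
    cont: "continuous_on {-a..a} u" and ua: "u (-a) = 0" "u a = 0" and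
    pos: "\<And>x. x \<in> {-a<..<a} \<Longrightarrow> u x > 0" and
    du: "\<And>x. x \<in> {-a<..<a} \<Longrightarrow> (u has_real_derivative u' x) (at x)" and
    ex2: "\<And>x. x \<in> {-a<..<a} - {0} \<Longrightarrow> \<exists>u''. (u' has_real_derivative u'') (at x) \<and>
                 - u'' + \<tau> * sgn x * u' x = l * u x"
  proof -
    have "continuous_on {-a..a} u \<and> u (-a) = 0 \<and> u a = 0 \<and>
     (\<exists>u'. (\<forall>x\<in>{-a<..<a}. u x > 0 \<and> (u has_real_derivative u' x) (at x)) \<and>
           (\<forall>x\<in>{-a<..<a} - {0}. \<exists>u''. (u' has_real_derivative u'') (at x) \<and>
                 - u'' + \<tau> * sgn x * u' x = l * u x))"
      using E unfolding is_principal_eigenpair_def by simp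
    then show ?thesis using that by blast
  qed
  have du': "(u' has_real_derivative (\<tau> * sgn x * u' x - l * u x)) (at x)"
    if xin: "x \<in> {-a<..<a} - {0}" for x
  proof -
    obtain u'' where "(u' has_real_derivative u'') (at x)" "- u'' + \<tau> * sgn x * u' x = l * u x"
      using ex2[OF xin] by blast
    moreover then have "u'' = \<tau> * sgn x * u' x - l * u x" by linarith
    ultimately show ?thesis by simp
  qed
  have "compact (u ` {-a..a})" by (rule compact_continuous_image[OF cont]) simp
  then obtain M where M: "\<And>x. x \<in> {-a..a} \<Longrightarrow> \<bar>u x\<bar> \<le> M"
    using compact_imp_bounded[of "u ` {-a..a}"] unfolding bounded_iff by (metis real_norm_def image_eqI)
  define e where "e = (\<lambda>y::real. exp (-\<tau> * \<bar>y\<bar>))"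
  define g where "g = (\<lambda>y. e y * u' y)"
  have dg: "(g has_real_derivative (- l * e x * u x)) (at x)" if "x \<in> {-a<..<a} - {0}" for x
  proof -
    have h1: "((\<lambda>y. exp (-\<tau> * \<bar>y\<bar>)) has_real_derivative (- \<tau> * sgn x * exp (-\<tau> * \<bar>x\<bar>))) (at x)"
      using that by (intro expabs_deriv) auto
    have "(g has_real_derivative (- \<tau> * sgn x * e x) * u' x + e x * (\<tau> * sgn x * u' x - l * u x)) (at x)"
      unfolding g_def e_def using DERIV_mult[OF h1 du'[OF that]] by (simp add: mult.commute)
    then show ?thesis by (simp add: algebra_simps)
  qed
  have bdg: "\<bar>- l * e x * u x\<bar> \<le> \<bar>l\<bar> * exp (\<bar>\<tau>\<bar> * a) * M" if "x \<in> {-a<..<a}" for x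
  proof -
    have "e x \<le> exp (\<bar>\<tau>\<bar> * a)" unfolding e_def
    proof (subst exp_le_cancel_iff)
      have "-\<tau> * \<bar>x\<bar> \<le> \<bar>\<tau>\<bar> * \<bar>x\<bar>" by (metis abs_ge_minus_self abs_mult abs_abs mult_minus_left)
      also have "\<dots> \<le> \<bar>\<tau>\<bar> * a" using that by (intro mult_left_mono) auto
      finally show "-\<tau> * \<bar>x\<bar> \<le> \<bar>\<tau>\<bar> * a" .
    qed
    moreover have "\<bar>u x\<bar> \<le> M" using M that by auto
    moreover have "e x \<ge> 0" unfolding e_def by simp
    ultimately show ?thesis by (simp add: abs_mult mult_mono mult_left_mono)
  qed
  define L where "L = \<bar>l\<bar> * exp (\<bar>\<tau>\<bar> * a) * M"
  have gR: "\<bar>g x\<bar> \<le> \<bar>g (a/2)\<bar> + L * a" if "x \<in> {0<..<a}" for x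
  proof -
    have "\<bar>g x - g (a/2)\<bar> \<le> L * \<bar>x - a/2\<bar>"
      by (rule lip_bound[of 0 a g "\<lambda>x. - l * e x * u x"]) (use a that dg bdg in \<open>auto simp: L_def\<close>)
    also have "\<dots> \<le> L * a" using that bdg[of "a/2"] a unfolding L_def
      by (intro mult_left_mono) auto
    finally show ?thesis by linarith
  qed
  have gL: "\<bar>g x\<bar> \<le> \<bar>g (-a/2)\<bar> + L * a" if "x \<in> {-a<..<0}" for x
  proof -
    have "\<bar>g x - g (-a/2)\<bar> \<le> L * \<bar>x - -a/2\<bar>"
      by (rule lip_bound[of "-a" 0 g "\<lambda>x. - l * e x * u x"]) (use a that dg bdg in \<open>auto simp: L_def\<close>)
    also have "\<dots> \<le> L * a" using that bdg[of "a/2"] a unfolding L_def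
      by (intro mult_left_mono) auto
    finally show ?thesis by linarith
  qed
  define G where "G = max (\<bar>g (a/2)\<bar> + L * a) (\<bar>g (-a/2)\<bar> + L * a)"
  define B where "B = G * exp (\<bar>\<tau>\<bar> * a)"
  have Bd: "\<bar>u' x\<bar> \<le> B" if "x \<in> {-a<..<a} - {0}" for x
  proof -
    have "\<bar>g x\<bar> \<le> G" using gR gL that unfolding G_def by (cases "x > 0") force+
    moreover have "u' x = g x * exp (\<tau> * \<bar>x\<bar>)" unfolding g_def e_def
      by (simp add: exp_minus field_simps)
    moreover have "exp (\<tau> * \<bar>x\<bar>) \<le> exp (\<bar>\<tau>\<bar> * a)"
    proof (subst exp_le_cancel_iff)
      have "\<tau> * \<bar>x\<bar> \<le> \<bar>\<tau>\<bar> * \<bar>x\<bar>" by (metis abs_ge_self abs_mult abs_abs)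
      also have "\<dots> \<le> \<bar>\<tau>\<bar> * a" using that by (intro mult_left_mono) auto
      finally show "\<tau> * \<bar>x\<bar> \<le> \<bar>\<tau>\<bar> * a" .
    qed
    ultimately show ?thesis unfolding B_def
      by (simp add: abs_mult mult_mono)
  qed
  define L2 where "L2 = \<bar>\<tau>\<bar> * B + \<bar>l\<bar> * M"
  have bd2: "\<bar>\<tau> * sgn x * u' x - l * u x\<bar> \<le> L2" if "x \<in> {-a<..<a} - {0}" for x
  proof -
    have "\<bar>sgn x\<bar> = 1" using that by (simp add: abs_sgn)
    then have "\<bar>\<tau> * sgn x * u' x\<bar> = \<bar>\<tau>\<bar> * \<bar>u' x\<bar>" by (simp add: abs_mult)
    also have "\<dots> \<le> \<bar>\<tau>\<bar> * B" using Bd[OF that] by (intro mult_left_mono) auto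
    finally have "\<bar>\<tau> * sgn x * u' x\<bar> \<le> \<bar>\<tau>\<bar> * B" .
    moreover have "\<bar>l * u x\<bar> \<le> \<bar>l\<bar> * M" using M that
      by (simp add: abs_mult mult_left_mono)
    ultimately show ?thesis unfolding L2_def by linarith
  qed
  have near: "\<bar>u' x - u' 0\<bar> \<le> L2 * \<bar>x\<bar>" if "x \<in> {-a<..<a}" "x \<noteq> 0" for x
  proof (cases "x > 0")
    case True
    have "\<bar>u' x - u' 0\<bar> \<le> L2 * x"
    proof (rule deriv_right[of a u u' "\<lambda>x. \<tau> * sgn x * u' x - l * u x"])
      show "0 < a" using a by simp
      show "x \<in> {0<..<a}" using that True by simp
      fix y assume y: "y \<in> {0..<a}"
      show "(u has_real_derivative u' y) (at y)" by (rule du) (use y a in auto)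
    next
      fix y assume y: "y \<in> {0<..<a}"
      show "(u' has_real_derivative \<tau> * sgn y * u' y - l * u y) (at y)" by (rule du') (use y a in auto)
      show "\<bar>\<tau> * sgn y * u' y - l * u y\<bar> \<le> L2" by (rule bd2) (use y a in auto)
    qed
    then show ?thesis using True by simp
  next
    case False
    then have "x < 0" using that by simp
    have "\<bar>u' x - u' 0\<bar> \<le> L2 * (-x)"
    proof (rule deriv_left[of "-a" u u' "\<lambda>x. \<tau> * sgn x * u' x - l * u x"])
      show "-a < 0" using a by simp
      show "x \<in> {-a<..<0}" using that \<open>x < 0\<close> by simp
      fix y assume y: "y \<in> {-a<..0}"
      show "(u has_real_derivative u' y) (at y)" by (rule du) (use y a in auto)
    next
      fix y assume y: "y \<in> {-a<..<0}"
      show "(u' has_real_derivative \<tau> * sgn y * u' y - l * u y) (at y)" by (rule du') (use y a in auto)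
      show "\<bar>\<tau> * sgn y * u' y - l * u y\<bar> \<le> L2" by (rule bd2) (use y a in auto)
    qed
    then show ?thesis using \<open>x < 0\<close> by simp
  qed
  have "((\<lambda>x. u' x - u' 0) \<longlongrightarrow> 0) (at 0)"
  proof (rule Lim_null_comparison)
    show "eventually (\<lambda>x. norm (u' x - u' 0) \<le> L2 * \<bar>x\<bar>) (at 0)"
      unfolding eventually_at
      by (rule exI[of _ a]) (use a near in \<open>auto simp: dist_real_def abs_less_iff\<close>)
    show "((\<lambda>x. L2 * \<bar>x\<bar>) \<longlongrightarrow> 0) (at 0)"
      by (auto intro!: tendsto_eq_intros)
  qed
  then have "isCont u' 0"
    unfolding isCont_def by (simp add: LIM_zero_iff)
  show ?thesis
    by (rule that[of u' B]) (use cont ua pos du du' Bd \<open>isCont u' 0\<close> in auto)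
qed

lemma uniq_lt:
  assumes a: "a > 0"
    and E1: "is_principal_eigenpair (2*a) \<tau> l1 u1"
    and E2: "is_principal_eigenpair (2*a) \<tau> l2 u2"
    and lt: "l1 < l2"
  shows False
proof -
  obtain u1' B1 where c1: "continuous_on {-a..a} u1" and z1: "u1 (-a) = 0" "u1 a = 0"
    and p1: "\<And>x. x \<in> {-a<..<a} \<Longrightarrow> u1 x > 0"
    and d1: "\<And>x. x \<in> {-a<..<a} \<Longrightarrow> (u1 has_real_derivative u1' x) (at x)"
    and dd1: "\<And>x. x \<in> {-a<..<a} - {0} \<Longrightarrow> (u1' has_real_derivative (\<tau> * sgn x * u1' x - l1 * u1 x)) (at x)"
    and b1: "\<And>x. x \<in> {-a<..<a} - {0} \<Longrightarrow> \<bar>u1' x\<bar> \<le> B1"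
    and i1: "isCont u1' 0"
    using eig_facts[OF a E1] by blast
  obtain u2' B2 where c2: "continuous_on {-a..a} u2" and z2: "u2 (-a) = 0" "u2 a = 0"
    and p2: "\<And>x. x \<in> {-a<..<a} \<Longrightarrow> u2 x > 0"
    and d2: "\<And>x. x \<in> {-a<..<a} \<Longrightarrow> (u2 has_real_derivative u2' x) (at x)"
    and dd2: "\<And>x. x \<in> {-a<..<a} - {0} \<Longrightarrow> (u2' has_real_derivative (\<tau> * sgn x * u2' x - l2 * u2 x)) (at x)"
    and b2: "\<And>x. x \<in> {-a<..<a} - {0} \<Longrightarrow> \<bar>u2' x\<bar> \<le> B2"
    and i2: "isCont u2' 0"
    using eig_facts[OF a E2] by blast
  define e where "e = (\<lambda>y::real. exp (-\<tau> * \<bar>y\<bar>))"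
  define W where "W = (\<lambda>y. e y * (u1' y * u2 y - u2' y * u1 y))"
  have dW: "(W has_real_derivative (l2 - l1) * e x * u1 x * u2 x) (at x)"
    if x: "x \<in> {-a<..<a} - {0}" for x
  proof -
    have h1: "(e has_real_derivative (- \<tau> * sgn x * e x)) (at x)"
      unfolding e_def using x by (intro expabs_deriv) auto
    have x': "x \<in> {-a<..<a}" using x by simp
    have hP: "((\<lambda>y. u1' y * u2 y - u2' y * u1 y) has_real_derivative
       ((\<tau> * sgn x * u1' x - l1 * u1 x) * u2 x + u2' x * u1' x)
     - ((\<tau> * sgn x * u2' x - l2 * u2 x) * u1 x + u1' x * u2' x)) (at x)"
      by (rule DERIV_diff[OF DERIV_mult[OF dd1[OF x] d2[OF x']] DERIV_mult[OF dd2[OF x] d1[OF x']]])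
    have "(W has_real_derivative (- \<tau> * sgn x * e x) * (u1' x * u2 x - u2' x * u1 x) +
        (((\<tau> * sgn x * u1' x - l1 * u1 x) * u2 x + u2' x * u1' x)
     - ((\<tau> * sgn x * u2' x - l2 * u2 x) * u1 x + u1' x * u2' x)) * e x) (at x)"
      unfolding W_def by (rule DERIV_mult[OF h1 hP])
    moreover have "(- \<tau> * sgn x * e x) * (u1' x * u2 x - u2' x * u1 x) +
        (((\<tau> * sgn x * u1' x - l1 * u1 x) * u2 x + u2' x * u1' x)
     - ((\<tau> * sgn x * u2' x - l2 * u2 x) * u1 x + u1' x * u2' x)) * e x = (l2 - l1) * e x * u1 x * u2 x"
      by (simp add: algebra_simps)
    ultimately show ?thesis by simp
  qed
  have dWpos: "\<exists>y. (W has_real_derivative y) (at x) \<and> y > 0" if x: "x \<in> {-a<..<a} - {0}" for x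
  proof (intro exI conjI)
    show "(W has_real_derivative (l2 - l1) * e x * u1 x * u2 x) (at x)" by (rule dW[OF x])
    have "u1 x > 0" "u2 x > 0" using p1 p2 x by auto
    moreover have "e x > 0" unfolding e_def by simp
    ultimately show "(l2 - l1) * e x * u1 x * u2 x > 0" using lt by simp
  qed
  have icW: "isCont W x" if x: "x \<in> {-a<..<a}" for x
  proof (cases "x = 0")
    case True
    have "isCont u1 0" "isCont u2 0" using d1[of 0] d2[of 0] a by (auto intro: DERIV_isCont)
    then show ?thesis unfolding W_def e_def True
      by (intro continuous_intros i1 i2)
  next
    case False
    then show ?thesis using dW[of x] x by (auto intro: DERIV_isCont)
  qed
  have coW: "continuous_on {p..q} W" if "-a < p" "q < a" for p q
    by (rule continuous_at_imp_continuous_on) (use icW that in auto)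
  have A: "W 0 < W (a/2)"
    by (rule DERIV_pos_imp_increasing_open) (use a dWpos coW in auto)
  have B: "W (-a/2) < W 0"
    by (rule DERIV_pos_imp_increasing_open) (use a dWpos coW in auto)
  have bound: "\<bar>W y\<bar> \<le> e y * (B1 * \<bar>u2 y\<bar> + B2 * \<bar>u1 y\<bar>)" if y: "y \<in> {-a<..<a} - {0}" for y
  proof -
    have "\<bar>u1' y * u2 y - u2' y * u1 y\<bar> \<le> \<bar>u1' y\<bar> * \<bar>u2 y\<bar> + \<bar>u2' y\<bar> * \<bar>u1 y\<bar>"
      by (metis abs_mult abs_triangle_ineq4)
    also have "\<dots> \<le> B1 * \<bar>u2 y\<bar> + B2 * \<bar>u1 y\<bar>"
      using b1[OF y] b2[OF y] by (intro add_mono mult_right_mono) auto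
    finally show ?thesis unfolding W_def e_def by (simp add: abs_mult mult_left_mono)
  qed
  have limR: "(W \<longlongrightarrow> 0) (at_left a)"
  proof (rule Lim_null_comparison)
    show "eventually (\<lambda>y. norm (W y) \<le> e y * (B1 * \<bar>u2 y\<bar> + B2 * \<bar>u1 y\<bar>)) (at_left a)"
      using eventually_at_left_real[of 0 a] a
      by (auto elim!: eventually_mono intro!: bound)
    have "(u1 \<longlongrightarrow> 0) (at_left a)" "(u2 \<longlongrightarrow> 0) (at_left a)"
      using continuous_on_Icc_at_leftD[OF c1] continuous_on_Icc_at_leftD[OF c2] z1 z2 a by auto
    then have "((\<lambda>y. e y * (B1 * \<bar>u2 y\<bar> + B2 * \<bar>u1 y\<bar>)) \<longlongrightarrow> e a * (B1 * \<bar>0\<bar> + B2 * \<bar>0\<bar>)) (at_left a)"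
      unfolding e_def by (intro tendsto_intros)
    then show "((\<lambda>y. e y * (B1 * \<bar>u2 y\<bar> + B2 * \<bar>u1 y\<bar>)) \<longlongrightarrow> 0) (at_left a)" by simp
  qed
  have limL: "(W \<longlongrightarrow> 0) (at_right (-a))"
  proof (rule Lim_null_comparison)
    show "eventually (\<lambda>y. norm (W y) \<le> e y * (B1 * \<bar>u2 y\<bar> + B2 * \<bar>u1 y\<bar>)) (at_right (-a))"
      using eventually_at_right_real[of "-a" 0] a
      by (auto elim!: eventually_mono intro!: bound)
    have "(u1 \<longlongrightarrow> 0) (at_right (-a))" "(u2 \<longlongrightarrow> 0) (at_right (-a))"
      using continuous_on_Icc_at_rightD[OF c1] continuous_on_Icc_at_rightD[OF c2] z1 z2 a by auto
    then have "((\<lambda>y. e y * (B1 * \<bar>u2 y\<bar> + B2 * \<bar>u1 y\<bar>)) \<longlongrightarrow> e (-a) * (B1 * \<bar>0\<bar> + B2 * \<bar>0\<bar>)) (at_right (-a))"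
      unfolding e_def by (intro tendsto_intros)
    then show "((\<lambda>y. e y * (B1 * \<bar>u2 y\<bar> + B2 * \<bar>u1 y\<bar>)) \<longlongrightarrow> 0) (at_right (-a))" by simp
  qed
  have C: "W (a/2) \<le> 0"
  proof (rule tendsto_lowerbound[OF limR])
    show "eventually (\<lambda>y. W (a/2) \<le> W y) (at_left a)"
    proof (rule eventually_mono[OF eventually_at_left_real[of "a/2" a]])
      show "a/2 < a" using a by simp
      fix y assume "y \<in> {a/2<..<a}"
      then have y: "a/2 < y" "y < a" by auto
      have "W (a/2) < W y"
        by (rule DERIV_pos_imp_increasing_open) (use a y dWpos coW in auto)
      then show "W (a/2) \<le> W y" by simp
    qed
  qed simp
  have D: "W (-a/2) \<ge> 0"
  proof (rule tendsto_upperbound[OF limL])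
    show "eventually (\<lambda>y. W (-a/2) \<ge> W y) (at_right (-a))"
    proof (rule eventually_mono[OF eventually_at_right_real[of "-a" "-a/2"]])
      show "-a < -a/2" using a by simp
      fix y assume "y \<in> {-a<..<-a/2}"
      then have y: "-a < y" "y < -a/2" by auto
      have "W y < W (-a/2)"
        by (rule DERIV_pos_imp_increasing_open) (use a y dWpos coW in auto)
      then show "W y \<le> W (-a/2)" by simp
    qed
  qed simp
  show False using A B C D by linarith
qed

lemma uniq:
  assumes a: "a > 0"
    and E1: "is_principal_eigenpair (2*a) \<tau> l1 u1"
    and E2: "is_principal_eigenpair (2*a) \<tau> l2 u2"
  shows "l1 = l2"
  using uniq_lt[OF a E1 E2] uniq_lt[OF a E2 E1] by (cases l1 l2 rule: linorder_cases) auto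

lemma root_exists:
  fixes a \<tau> :: real
  assumes a: "a > 0" and t: "\<tau> \<ge> 1 + 4/a"
  shows "\<exists>\<delta>. 0 < \<delta> \<and> \<delta> \<le> \<tau>/4 \<and> \<delta>*(exp((\<tau>-2*\<delta>)*a)+1) = \<tau>"
proof -
  have tpos: "\<tau> > 0" using t a by (smt (verit) divide_pos_pos)
  have ta: "\<tau> * a \<ge> 4"
  proof -
    have "\<tau> * a \<ge> (1 + 4/a) * a" using t a by (intro mult_right_mono) auto
    moreover have "(1 + 4/a) * a = a + 4" using a by (simp add: field_simps)
    ultimately show ?thesis using a by linarith
  qed
  define h where "h = (\<lambda>d. d*(exp((\<tau>-2*d)*a)+1))"
  have "exp (\<tau> * a / 2) \<ge> 3" using exp_ge_add_one_self[of "\<tau> * a / 2"] ta by linarith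
  then have "h (\<tau>/4) \<ge> \<tau>" unfolding h_def using tpos
    by (simp add: field_simps)
  moreover have "h 0 \<le> \<tau>" unfolding h_def using tpos by simp
  moreover have "continuous_on {0..\<tau>/4} h" unfolding h_def by (intro continuous_intros)
  ultimately obtain d where d: "0 \<le> d" "d \<le> \<tau>/4" "h d = \<tau>"
    using IVT'[of h 0 \<tau> "\<tau>/4"] tpos by auto
  then have "d \<noteq> 0" using tpos unfolding h_def by auto
  then show ?thesis using d unfolding h_def by (intro exI[of _ d]) auto
qed

lemma F1_eq:
  fixes a \<tau> \<delta> :: real
  assumes a: "a > 0" and t: "\<tau> > 0" and d: "0 < \<delta>" "2*\<delta> < \<tau>"
    and rel: "\<delta>*(exp((\<tau>-2*\<delta>)*a)+1) = \<tau>"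
  shows "F1 (2*a) \<tau> = \<delta>*(\<tau>-\<delta>)"
proof -
  have P: "is_principal_eigenpair (2*a) \<tau> (\<delta>*(\<tau>-\<delta>))
           (\<lambda>x. (\<tau>-\<delta>)*exp(\<delta>*\<bar>x\<bar>) - \<delta>*exp((\<tau>-\<delta>)*\<bar>x\<bar>))"
    by (rule exists_pair) (use a t d rel in auto)
  show ?thesis unfolding F1_def
  proof (rule the_equality)
    show "\<exists>u. is_principal_eigenpair (2*a) \<tau> (\<delta>*(\<tau>-\<delta>)) u" using P by blast
    fix lam assume "\<exists>u. is_principal_eigenpair (2*a) \<tau> lam u"
    then obtain u where "is_principal_eigenpair (2*a) \<tau> lam u" by blast
    then show "lam = \<delta>*(\<tau>-\<delta>)" using uniq[OF a _ P] by blast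
  qed
qed

lemma main_bound:
  fixes a \<tau> :: real
  assumes a: "a > 0" and t: "\<tau> \<ge> 1 + 4/a"
  shows "\<bar>exp (\<tau> * a) * F1 (2*a) \<tau> / \<tau>^2 - 1\<bar> \<le> (2*a*exp 4^2 + 2*exp 4) * \<tau> * exp (-\<tau> * a)"
proof -
  have t1: "\<tau> \<ge> 1" using t a by (smt (verit) divide_pos_pos)
  obtain \<delta> where d: "0 < \<delta>" "\<delta> \<le> \<tau>/4" and rel: "\<delta>*(exp((\<tau>-2*\<delta>)*a)+1) = \<tau>"
    using root_exists[OF a t] by blast
  have F: "F1 (2*a) \<tau> = \<delta>*(\<tau>-\<delta>)"
    by (rule F1_eq[OF a _ d(1) _ rel]) (use t1 d in auto)
  define G where "G = exp (\<tau> * a)"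
  define Y where "Y = exp (2 * \<delta> * a)"
  define K where "K = exp (4::real)"
  have Gpos: "G > 0" unfolding G_def by simp
  have Y1: "Y \<ge> 1" unfolding Y_def using d a by simp
  have R: "\<delta> * G = (\<tau> - \<delta>) * Y"
  proof -
    have "exp((\<tau>-2*\<delta>)*a) = G / Y" unfolding G_def Y_def
      by (simp add: exp_diff[symmetric] algebra_simps)
    then have "\<delta> * (G / Y) = \<tau> - \<delta>" using rel by (simp add: algebra_simps)
    then show ?thesis using Y1 by (simp add: field_simps)
  qed
  have small: "\<delta> \<le> 2/a"
  proof -
    have "\<delta> * a \<le> (\<tau>/4) * a" using d a by (intro mult_right_mono) auto
    then have "exp((\<tau>-2*\<delta>)*a) \<ge> exp (\<tau> * a / 2)"
      by (simp add: algebra_simps)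
    moreover have "exp (\<tau> * a / 2) > \<tau> * a / 2" using exp_ge_add_one_self[of "\<tau> * a / 2"] by linarith
    ultimately have X: "exp((\<tau>-2*\<delta>)*a) > \<tau> * a / 2" by linarith
    have "\<delta> * (\<tau> * a / 2) \<le> \<delta> * exp((\<tau>-2*\<delta>)*a)" using X d by simp
    also have "\<dots> \<le> \<tau>" using rel d by (simp add: algebra_simps)
    finally have "\<delta> * a / 2 \<le> 1" using t1 by (simp add: field_simps)
    then show ?thesis using a by (simp add: field_simps)
  qed
  have YK: "Y \<le> K" unfolding Y_def K_def using small a by (simp add: field_simps)
  have dK: "\<delta> * G \<le> K * \<tau>"
  proof -
    have "(\<tau> - \<delta>) * Y \<le> \<tau> * K" using d YK Y1 t1 by (intro mult_mono) auto
    then show ?thesis using R by (simp add: mult.commute)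
  qed
  have Q: "exp (\<tau> * a) * F1 (2*a) \<tau> / \<tau>^2 = (\<tau> - \<delta>)^2 * Y / \<tau>^2"
  proof -
    have "G*(\<delta>*(\<tau>-\<delta>)) = (\<delta>*G)*(\<tau>-\<delta>)" by (simp add: algebra_simps)
    also have "\<dots> = (\<tau> - \<delta>)^2 * Y" unfolding R by (simp add: power2_eq_square)
    finally show ?thesis unfolding F G_def[symmetric] by simp
  qed
  have Em: "exp (-\<tau> * a) = 1 / G" unfolding G_def by (simp add: exp_minus field_simps)
  have Kpos: "K > 0" unfolding K_def by simp
  have up: "(\<tau> - \<delta>)^2 * Y / \<tau>^2 - 1 \<le> 2*a*K^2 * \<tau> / G"
  proof -
    have "(\<tau> - \<delta>)^2 \<le> \<tau>^2" using d t1 by (intro power_mono) auto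
    then have "(\<tau> - \<delta>)^2 * Y / \<tau>^2 \<le> Y" using Y1 t1 by (simp add: field_simps mult_right_mono)
    moreover have "Y - 1 \<le> 2 * \<delta> * a * Y"
    proof -
      have "exp (-(2*\<delta>*a)) \<ge> 1 - 2*\<delta>*a" using exp_ge_add_one_self[of "-(2*\<delta>*a)"] by simp
      then have "exp (-(2*\<delta>*a)) * Y \<ge> (1 - 2*\<delta>*a) * Y" using Y1 by (intro mult_right_mono) auto
      then show ?thesis unfolding Y_def by (simp add: exp_minus algebra_simps)
    qed
    moreover have "2 * \<delta> * a * Y \<le> 2 * a * K * \<delta>"
      using YK d a by (simp add: mult_left_mono mult.commute mult.left_commute)
    moreover have "2 * a * K * \<delta> \<le> 2*a*K^2 * \<tau> / G"
    proof -
      have "\<delta> \<le> K * \<tau> / G" using dK Gpos by (simp add: field_simps)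
      then have "2*a*K * \<delta> \<le> 2*a*K * (K * \<tau> / G)" using a Kpos by (intro mult_left_mono) auto
      then show ?thesis by (simp add: power2_eq_square)
    qed
    ultimately show ?thesis by linarith
  qed
  have lo: "1 - (\<tau> - \<delta>)^2 * Y / \<tau>^2 \<le> 2*K * \<tau> / G"
  proof -
    have "(\<tau> - \<delta>)^2 * 1 \<le> (\<tau> - \<delta>)^2 * Y" using Y1 by (intro mult_left_mono) auto
    then have "(\<tau> - \<delta>)^2 * Y / \<tau>^2 \<ge> (\<tau> - \<delta>)^2 / \<tau>^2" using t1
      by (simp add: divide_right_mono)
    moreover have "(\<tau> - \<delta>)^2 / \<tau>^2 \<ge> 1 - 2 * \<delta> / \<tau>" using t1
      by (simp add: field_simps power2_eq_square)
    moreover have "2 * \<delta> / \<tau> \<le> 2*K * \<tau> / G"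
    proof -
      have "\<delta> \<le> K * \<tau> / G" using dK Gpos by (simp add: field_simps)
      also have "\<dots> \<le> K * \<tau> * \<tau> / G" using Kpos Gpos t1
        by (simp add: field_simps mult_left_mono)
      finally have "\<delta> \<le> K * \<tau> * \<tau> / G" .
      then have "2 * \<delta> / \<tau> \<le> 2 * (K * \<tau> * \<tau> / G) / \<tau>" using t1 by (intro divide_right_mono) auto
      also have "\<dots> = 2*K * \<tau> / G" using t1 by (simp add: field_simps)
      finally show ?thesis .
    qed
    ultimately show ?thesis by linarith
  qed
  have "\<bar>(\<tau> - \<delta>)^2 * Y / \<tau>^2 - 1\<bar> \<le> (2*a*K^2 + 2*K) * \<tau> / G"
  proof -
    have "2*a*K^2 * \<tau> / G \<ge> 0" "2*K * \<tau> / G \<ge> 0" using a Kpos Gpos t1 by auto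
    then show ?thesis using up lo by (simp add: add_divide_distrib distrib_right abs_le_iff)
  qed
  then show ?thesis unfolding Q Em K_def by simp
qed

theorem mainTheorem11:
  fixes m :: real
  assumes "m > 0"
  shows "(\<exists>C \<tau>0. C \<ge> 0 \<and> \<tau>0 \<ge> 0 \<and>
           (\<forall>\<tau>\<ge>\<tau>0. \<bar>exp (\<tau> * m / 2) * F1 m \<tau> / \<tau>\<^sup>2 - 1\<bar> \<le> C * \<tau> * exp (- \<tau> * m / 2))) \<and>
         (((\<lambda>\<tau>. exp (\<tau> * m / 2) * F1 m \<tau> / \<tau>\<^sup>2) \<longlongrightarrow> 1) at_top)"
proof -
  define a where "a = m/2"
  have a: "a > 0" using assms a_def by simp
  have m2: "m = 2*a" using a_def by simp
  define C where "C = 2*a*exp 4^2 + 2*exp (4::real)"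
  have C0: "C \<ge> 0" using a unfolding C_def by simp
  have bnd: "\<bar>exp (\<tau> * m / 2) * F1 m \<tau> / \<tau>\<^sup>2 - 1\<bar> \<le> C * \<tau> * exp (- \<tau> * m / 2)"
    if t: "\<tau> \<ge> 1 + 4/a" for \<tau>
  proof -
    have e1: "exp (\<tau> * m / 2) = exp (\<tau> * a)" using a_def by (simp add: mult.commute)
    have e2: "exp (- \<tau> * m / 2) = exp (-\<tau> * a)" using a_def by (simp add: mult.commute)
    have e3: "F1 m \<tau> = F1 (2*a) \<tau>" using m2 by simp
    have "\<bar>exp (\<tau> * a) * F1 (2*a) \<tau> / \<tau>^2 - 1\<bar> \<le> C * \<tau> * exp (-\<tau> * a)"
      using main_bound[OF a t] unfolding C_def .
    then show ?thesis unfolding e1 e2 e3 .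
  qed
  have t0: "1 + 4/a \<ge> 0" using a by simp
  have part1: "\<exists>C \<tau>0. C \<ge> 0 \<and> \<tau>0 \<ge> 0 \<and>
           (\<forall>\<tau>\<ge>\<tau>0. \<bar>exp (\<tau> * m / 2) * F1 m \<tau> / \<tau>\<^sup>2 - 1\<bar> \<le> C * \<tau> * exp (- \<tau> * m / 2))"
    using C0 t0 bnd by blast
  have lim0: "((\<lambda>\<tau>::real. C * \<tau> * exp (- \<tau> * m / 2)) \<longlongrightarrow> 0) at_top"
    using assms by real_asymp
  have "((\<lambda>\<tau>. exp (\<tau> * m / 2) * F1 m \<tau> / \<tau>\<^sup>2 - 1) \<longlongrightarrow> 0) at_top"
  proof (rule Lim_null_comparison[OF _ lim0])
    show "eventually (\<lambda>\<tau>. norm (exp (\<tau> * m / 2) * F1 m \<tau> / \<tau>\<^sup>2 - 1) \<le> C * \<tau> * exp (- \<tau> * m / 2)) at_top"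
      by (rule eventually_mono[OF eventually_ge_at_top[of "1 + 4/a"]]) (use bnd in simp)
  qed
  then have "((\<lambda>\<tau>. exp (\<tau> * m / 2) * F1 m \<tau> / \<tau>\<^sup>2) \<longlongrightarrow> 1) at_top"
    by (simp add: LIM_zero_iff)
  with part1 show ?thesis by blast
qed

end
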